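(* Let $d\ge1$, $0<\mu\le L$, let $A\in\mathbb{R}^{d\times d}$ be symmetric with $\mu I\preceq A\preceq LI$, $b\in\mathbb{R}^d$, $f(x)=\frac12x^\top Ax+b^\top x$, and let $\{x_t\},\{G_t\}$ be generated by Sharpened-BFGS for quadratics from an arbitrary $x_0$, assuming $\nabla f(x_t)\neq0$ for all $t$ considered. Let $\theta_t:=\theta(A,G_t,x_{t+1}-x_t)$ and $\sigma_t:=\sigma(A,G_t)$. Then for all $t\ge0$, $$\sigma_{t+1}\le\left(1-\frac{\mu}{dL}\right)\left(\sigma_t-\theta_t^2\right),$$ and for all $t\ge1$, $$\sum_{i=0}^{t-1}\frac{\theta_i^2}{\left(1-\frac{\mu}{dL}\right)^i}\le\sigma_0.$$
   Context: For symmetric positive definite $A,G\in\mathbb{R}^{d\times d}$ and $u\in\mathbb{R}^d\setminus\{0\}$, the BFGS operator is $\mathrm{BFGS}(A,G,u):=G-\frac{Guu^\top G}{u^\top Gu}+\frac{Auu^\top A}{u^\top Au}$. The greedy vector is $\bar u(A,G):=\arg\max_{u\in\{e_1,\dots,e_d\}}\frac{u^\top Gu}{u^\top Au}$ (ties broken arbitrarily). Define $\theta(A,G,u):=\left(\frac{u^\top (G-A)A^{-1}(G-A)u}{u^\top GA^{-1}Gu}\right)^{1/2}$ and $\sigma(A,G):=\mathrm{Tr}(A^{-1}G)-d$. Sharpened-BFGS for quadratics: set $G_0=LI$; for $t=0,1,2,\dots$: $x_{t+1}=x_t-G_t^{-1}\nabla f(x_t)$, $s_t=x_{t+1}-x_t$,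 $\bar G_t=\mathrm{BFGS}(A,G_t,s_t)$, $\bar u=\bar u(A,\bar G_t)$, $G_{t+1}=\mathrm{BFGS}(A,\bar G_t,\bar u)$. *)

theory Defs
  imports "HOL-Analysis.Analysis"
begin

definition outer :: "real^'n \<Rightarrow> real^'n \<Rightarrow> real^'n^'n" where
  "outer a c = (\<chi> i j. a$i * c$j)"

definition BFGS :: "real^'n^'n \<Rightarrow> real^'n^'n \<Rightarrow> real^'n \<Rightarrow> real^'n^'n" where
  "BFGS A G u = G - (1 / (u \<bullet> (G *v u))) *\<^sub>R outer (G *v u) (u v* G)
                  + (1 / (u \<bullet> (A *v u))) *\<^sub>R outer (A *v u) (u v* A)"

definition is_greedy :: "real^'n^'n \<Rightarrow> real^'n^'n \<Rightarrow> real^'n \<Rightarrow> bool" where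
  "is_greedy A G u \<longleftrightarrow> (\<exists>i. u = axis i 1 \<and>
      (\<forall>j. (axis j 1 \<bullet> (G *v axis j 1)) / (axis j 1 \<bullet> (A *v axis j 1))
            \<le> (axis i 1 \<bullet> (G *v axis i 1)) / (axis i 1 \<bullet> (A *v axis i 1))))"

definition theta :: "real^'n^'n \<Rightarrow> real^'n^'n \<Rightarrow> real^'n \<Rightarrow> real" where
  "theta A G u = sqrt ((u \<bullet> (((G - A) ** matrix_inv A ** (G - A)) *v u))
                     / (u \<bullet> ((G ** matrix_inv A ** G) *v u)))"

definition sigma :: "real^'n^'n \<Rightarrow> real^'n^'n \<Rightarrow> real" where
  "sigma A G = trace (matrix_inv A ** G) - real CARD('n)"

definition quad_f :: "real^'n^'n \<Rightarrow> real^'n \<Rightarrow> real^'n \<Rightarrow> real" where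
  "quad_f A b x = (1/2) * (x \<bullet> (A *v x)) + b \<bullet> x"

definition grad :: "(real^'n \<Rightarrow> real) \<Rightarrow> real^'n \<Rightarrow> real^'n" where
  "grad f x = (THE D. GDERIV f x :> D)"

end

theory Submission
  imports Defs
begin

lemma sym_inner:
  fixes M :: "real^'n^'n"
  assumes "transpose M = M"
  shows "x \<bullet> (M *v y) = (M *v x) \<bullet> y"
proof -
  have "x \<bullet> (M *v y) = (x v* M) \<bullet> y" by (simp add: dot_lmul_matrix)
  also have "x v* M = transpose M *v x" by simp
  finally show ?thesis using assms by simp
qed

lemma axis_mv: "(M::real^'n^'n) *v axis i 1 = (\<chi> j. M$j$i)"
  by (simp add: vec_eq_iff matrix_vector_mult_def axis_def if_distrib cong: if_cong)

lemma axis_quad: "axis j 1 \<bullet> ((M::real^'n^'n) *v axis i 1) = M$j$i"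
  by (simp add: axis_mv inner_axis')

lemma outer_mv: "outer a c *v v = (c \<bullet> v) *\<^sub>R (a::real^'n)"
  by (simp add: vec_eq_iff outer_def matrix_vector_mult_def inner_vec_def sum_distrib_left mult_ac)

lemma trace_outer: "trace ((M::real^'n^'n) ** outer a c) = (M *v a) \<bullet> c"
  by (simp add: trace_def outer_def matrix_matrix_mult_def matrix_vector_mult_def inner_vec_def
      sum_distrib_left sum_distrib_right mult_ac)

lemma transpose_outer: "transpose (outer a c) = outer c (a::real^'n)"
  by (simp add: vec_eq_iff outer_def transpose_def)

lemma sym_iff: "transpose (M::real^'n^'n) = M \<longleftrightarrow> (\<forall>i j. M$i$j = M$j$i)"
  by (auto simp: vec_eq_iff transpose_def)

lemma real_cs_aux:
  fixes a p q :: real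
  assumes "\<forall>t. 0 \<le> a + 2*t*p + t^2*q" "0 \<le> q"
  shows "p^2 \<le> a*q"
proof (cases "q = 0")
  case True
  show ?thesis
  proof (rule ccontr)
    assume "\<not> ?thesis"
    hence "p \<noteq> 0" using True by simp
    have "0 \<le> a + 2*(-(a+1)/(2*p))*p + (-(a+1)/(2*p))^2*q" using assms(1) by blast
    also have "\<dots> = -1" using True \<open>p\<noteq>0\<close> by (simp add: field_simps)
    finally show False by simp
  qed
next
  case False
  hence q: "q > 0" using assms by simp
  have "0 \<le> a + 2*(-p/q)*p + (-p/q)^2*q" using assms(1) by blast
  also have "\<dots> = a - p^2/q" using q by (simp add: field_simps power2_eq_square)
  finally show ?thesis using q by (simp add: field_simps)
qed

definition psd :: "real^'n^'n \<Rightarrow> bool" where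
  "psd R \<longleftrightarrow> (\<forall>v. 0 \<le> v \<bullet> (R *v v))"

lemma psd_cs:
  fixes B :: "real^'n^'n"
  assumes "transpose B = B" "psd B"
  shows "(x \<bullet> (B *v y))^2 \<le> (x \<bullet> (B *v x)) * (y \<bullet> (B *v y))"
proof -
  have "\<forall>t. 0 \<le> (x \<bullet> (B *v x)) + 2*t*(x \<bullet> (B *v y)) + t^2*(y \<bullet> (B *v y))"
  proof
    fix t
    have "0 \<le> (x + t *\<^sub>R y) \<bullet> (B *v (x + t *\<^sub>R y))" using assms(2) psd_def by blast
    also have "\<dots> = (x \<bullet> (B *v x)) + t*(x \<bullet> (B *v y)) + t*(y \<bullet> (B *v x)) + t^2*(y \<bullet> (B *v y))"
      by (simp add: matrix_vector_right_distrib matrix_vector_mult_scaleR inner_add_left inner_add_right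
          power2_eq_square algebra_simps)
    also have "y \<bullet> (B *v x) = x \<bullet> (B *v y)"
      using sym_inner[OF assms(1)] by (metis inner_commute)
    finally show "0 \<le> (x \<bullet> (B *v x)) + 2*t*(x \<bullet> (B *v y)) + t^2*(y \<bullet> (B *v y))" by simp
  qed
  moreover have "0 \<le> y \<bullet> (B *v y)" using assms(2) psd_def by blast
  ultimately show ?thesis by (rule real_cs_aux)
qed


lemma psd_diag: fixes R :: "real^'n^'n" shows "psd R \<Longrightarrow> 0 \<le> R$i$i"
  using axis_quad[where M=R and i=i and j=i] unfolding psd_def by metis

lemma psd_entry:
  assumes "transpose R = R" "psd (R::real^'n^'n)"
  shows "(R$j$i)^2 \<le> R$j$j * R$i$i"
  using psd_cs[OF assms, of "axis j 1" "axis i 1"] by (simp add: axis_quad)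

lemma outer_entry: "outer a c $ j $ k = a$j * (c::real^'n)$k"
  by (simp add: outer_def)

lemma psd_decomp_aux:
  "card {j. (R::real^'n^'n)$j$j \<noteq> 0} = n \<Longrightarrow> transpose R = R \<Longrightarrow> psd R \<Longrightarrow>
     \<exists>ws. R = sum_list (map (\<lambda>w. outer w w) ws)"
proof (induction n arbitrary: R rule: less_induct)
  case (less n R)
  show ?case
  proof (cases "\<forall>j. R$j$j = 0")
    case True
    have "R = 0"
    proof (simp add: vec_eq_iff, intro allI)
      fix j i
      have "(R$j$i)^2 \<le> 0" using psd_entry[OF less(3,4), of j i] True by simp
      thus "R$j$i = 0" by simp
    qed
    thus ?thesis by (intro exI[of _ "[]"]) simp
  next
    case False
    then obtain i where ii: "R$i$i \<noteq> 0" by blast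
    define d where "d = R$i$i"
    have dpos: "d > 0" using psd_diag[OF less(4), of i] ii d_def by simp
    define w where "w = (1 / sqrt d) *\<^sub>R (R *v axis i 1)"
    have wj: "w$j = R$j$i / sqrt d" for j by (simp add: w_def axis_mv)
    define R' where "R' = R - outer w w"
    have R'e: "R'$j$k = R$j$k - R$j$i * R$k$i / d" for j k
      using dpos by (simp add: R'_def outer_entry wj real_sqrt_mult[symmetric])
    have sym': "transpose R' = R'"
      using less(3) unfolding sym_iff by (simp add: R'e mult.commute)
    have psd': "psd R'" unfolding psd_def
    proof
      fix v
      have "v \<bullet> (R' *v v) = v \<bullet> (R *v v) - (w \<bullet> v) * (v \<bullet> w)"
        by (simp add: R'_def matrix_vector_mult_diff_rdistrib outer_mv inner_diff_right)
      also have "w \<bullet> v = (v \<bullet> (R *v axis i 1)) / sqrt d"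
        by (simp add: w_def inner_commute)
      also have "v \<bullet> w = (v \<bullet> (R *v axis i 1)) / sqrt d"
        by (simp add: w_def)
      finally have eq: "v \<bullet> (R' *v v) = v \<bullet> (R *v v) - (v \<bullet> (R *v axis i 1))^2 / d"
        using dpos by (simp add: power2_eq_square)
      have "(v \<bullet> (R *v axis i 1))^2 \<le> (v \<bullet> (R *v v)) * d"
        using psd_cs[OF less(3,4), of v "axis i 1"] by (simp add: axis_quad d_def)
      hence "(v \<bullet> (R *v axis i 1))^2 / d \<le> v \<bullet> (R *v v)"
        using dpos by (simp add: divide_le_eq)
      thus "0 \<le> v \<bullet> (R' *v v)" using eq by simp
    qed
    have sub: "{j. R'$j$j \<noteq> 0} \<subset> {j. R$j$j \<noteq> 0}"
    proof
      show "{j. R'$j$j \<noteq> 0} \<subseteq> {j. R$j$j \<noteq> 0}"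
      proof
        fix j assume "j \<in> {j. R'$j$j \<noteq> 0}"
        hence nz: "R'$j$j \<noteq> 0" by simp
        show "j \<in> {j. R$j$j \<noteq> 0}"
        proof (rule ccontr)
          assume "j \<notin> {j. R$j$j \<noteq> 0}"
          hence "R$j$j = 0" by simp
          hence "(R$j$i)^2 \<le> 0" using psd_entry[OF less(3,4), of j i] by simp
          hence "R$j$i = 0" by simp
          thus False using nz \<open>R$j$j = 0\<close> by (simp add: R'e)
        qed
      qed
      have "R'$i$i = 0" using dpos by (simp add: R'e d_def[symmetric] power2_eq_square)
      thus "{j. R'$j$j \<noteq> 0} \<noteq> {j. R$j$j \<noteq> 0}" using ii by blast
    qed
    have "card {j. R'$j$j \<noteq> 0} < n" using less(2) psubset_card_mono[OF _ sub] by simp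
    then obtain ws where "R' = sum_list (map (\<lambda>w. outer w w) ws)"
      using less(1) sym' psd' by blast
    hence "R = sum_list (map (\<lambda>w. outer w w) (w # ws))" unfolding R'_def by (simp add: algebra_simps)
    thus ?thesis by blast
  qed
qed

lemma psd_decomp:
  "transpose R = R \<Longrightarrow> psd (R::real^'n^'n) \<Longrightarrow> \<exists>ws. R = sum_list (map (\<lambda>w. outer w w) ws)"
  using psd_decomp_aux by blast

lemma trace_sum_list_outer:
  "trace ((M::real^'n^'n) ** sum_list (map (\<lambda>w. outer w w) ws)) = (\<Sum>w\<leftarrow>ws. (M *v w) \<bullet> w)"
  proof (induction ws)
  case Nil thus ?case by (simp add: trace_def matrix_matrix_mult_def)
next
  case (Cons a ws) thus ?case by (simp add: matrix_add_ldistrib trace_add trace_outer)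
qed


lemma matrix_sub_ldistrib: "(M::real^'n^'n) ** (B - C) = M ** B - M ** C"
  by (simp add: matrix_matrix_mult_def vec_eq_iff sum_subtractf algebra_simps)

locale qsetting =
  fixes A :: "real^'n^'n" and \<mu> L :: real
  assumes mu_pos: "0 < \<mu>" and mu_le_L: "\<mu> \<le> L"
    and A_sym: "transpose A = A"
    and A_bounds: "\<forall>v. \<mu> * (v \<bullet> v) \<le> v \<bullet> (A *v v) \<and> v \<bullet> (A *v v) \<le> L * (v \<bullet> v)"
begin

abbreviation "Ai \<equiv> matrix_inv A"

lemma A_lo: "\<mu> * (v \<bullet> v) \<le> v \<bullet> (A *v v)" using A_bounds by blast
lemma A_hi: "v \<bullet> (A *v v) \<le> L * (v \<bullet> v)" using A_bounds by blast

lemma A_inv: "A ** Ai = mat 1 \<and> Ai ** A = mat 1"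
proof -
  have "\<forall>x. A *v x = 0 \<longrightarrow> x = 0"
  proof (intro allI impI)
    fix x assume "A *v x = 0"
    hence "\<mu> * (x \<bullet> x) \<le> 0" using A_lo[of x] by simp
    hence "x \<bullet> x \<le> 0" using mu_pos by (simp add: mult_le_0_iff)
    thus "x = 0" using inner_gt_zero_iff[of x] by linarith
  qed
  hence "invertible A" using matrix_left_invertible_ker invertible_left_inverse by blast
  thus ?thesis unfolding matrix_inv_def invertible_def by (rule someI_ex)
qed

lemma AAi: "A *v (Ai *v y) = y"
  using A_inv by (simp add: matrix_vector_mul_assoc)
lemma AiA: "Ai *v (A *v y) = y"
  using A_inv by (simp add: matrix_vector_mul_assoc)

lemma Ai_sym: "transpose Ai = Ai"
proof -
  have "transpose Ai = transpose Ai ** (A ** Ai)" using A_inv by simp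
  also have "\<dots> = (transpose Ai ** transpose A) ** Ai" using A_sym by (simp add: matrix_mul_assoc)
  also have "transpose Ai ** transpose A = transpose (A ** Ai)" by (simp add: matrix_transpose_mul)
  also have "\<dots> = mat 1" using A_inv by (simp add: transpose_mat)
  finally show ?thesis by simp
qed

lemma Ai_quad: "y \<bullet> (Ai *v y) = (Ai *v y) \<bullet> (A *v (Ai *v y))"
  by (simp add: AAi inner_commute)

lemma Ai_nonneg: "0 \<le> y \<bullet> (Ai *v y)"
proof -
  have "\<mu> * ((Ai *v y) \<bullet> (Ai *v y)) \<le> y \<bullet> (Ai *v y)" using A_lo Ai_quad by metis
  moreover have "0 \<le> \<mu> * ((Ai *v y) \<bullet> (Ai *v y))" using mu_pos by simp
  ultimately show ?thesis by linarith
qed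

lemma Ai_psd: "psd Ai" using Ai_nonneg psd_def by blast

lemma Ai_upper: "\<mu> * (y \<bullet> (Ai *v y)) \<le> y \<bullet> y"
proof -
  define z where "z = Ai *v y"
  have Az: "A *v z = y" by (simp add: z_def AAi)
  have q: "y \<bullet> (Ai *v y) = z \<bullet> y" by (simp add: z_def inner_commute)
  have "\<mu> * (norm z)^2 \<le> z \<bullet> y" using A_lo[of z] Az by (simp add: dot_square_norm)
  also have "\<dots> \<le> norm z * norm y" by (rule norm_cauchy_schwarz)
  finally have h: "\<mu> * (norm z)^2 \<le> norm z * norm y" .
  have h2: "\<mu> * norm z \<le> norm y"
  proof (cases "norm z = 0")
    case True thus ?thesis by simp
  next
    case False
    hence "norm z > 0" by simp
    with h show ?thesis by (simp add: power2_eq_square mult_ac)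
  qed
  have "\<mu> * (z \<bullet> y) \<le> \<mu> * (norm z * norm y)"
    using norm_cauchy_schwarz[of z y] mu_pos by simp
  also have "\<dots> = (\<mu> * norm z) * norm y" by simp
  also have "\<dots> \<le> norm y * norm y" using h2 by (simp add: mult_right_mono)
  finally show ?thesis using q by (simp add: dot_square_norm power2_eq_square)
qed

lemma trace_AiA: "trace (Ai ** A) = real CARD('n)"
  using A_inv by (simp add: trace_I)

lemma sigma_eq: "sigma A G = trace (Ai ** (G - A))"
  unfolding sigma_def by (simp add: matrix_sub_ldistrib trace_sub trace_AiA)

lemma sigma_bounds:
  assumes "transpose G = G" "psd (G - A)"
  shows "0 \<le> sigma A G \<and> \<mu> * sigma A G \<le> trace (G - A)"
proof -
  have sR: "transpose (G - A) = G - A" using assms(1) A_sym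
    by (simp add: sym_iff)
  obtain ws where ws: "G - A = sum_list (map (\<lambda>w. outer w w) ws)"
    using psd_decomp[OF sR assms(2)] by blast
  have s1: "sigma A G = (\<Sum>w\<leftarrow>ws. (Ai *v w) \<bullet> w)"
    by (simp add: sigma_eq ws trace_sum_list_outer)
  have s2: "trace (G - A) = (\<Sum>w\<leftarrow>ws. w \<bullet> w)"
    using trace_sum_list_outer[of "mat 1" ws] ws by simp
  have "0 \<le> (\<Sum>w\<leftarrow>ws. (Ai *v w) \<bullet> w)"
    by (rule sum_list_nonneg) (auto simp: inner_commute Ai_nonneg)
  moreover have "\<mu> * (\<Sum>w\<leftarrow>ws. (Ai *v w) \<bullet> w) \<le> (\<Sum>w\<leftarrow>ws. w \<bullet> w)"
  proof -
    have "\<mu> * (\<Sum>w\<leftarrow>ws. (Ai *v w) \<bullet> w) = (\<Sum>w\<leftarrow>ws. \<mu> * ((Ai *v w) \<bullet> w))"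
      by (simp add: sum_list_const_mult)
    also have "\<dots> \<le> (\<Sum>w\<leftarrow>ws. w \<bullet> w)"
      by (rule sum_list_mono) (metis Ai_upper inner_commute)
    finally show ?thesis .
  qed
  ultimately show ?thesis using s1 s2 by simp
qed

end

lemma matrix_scaleR_right: "(M::real^'n^'n) ** (k *\<^sub>R B) = k *\<^sub>R (M ** B)"
  by (simp add: matrix_matrix_mult_def vec_eq_iff sum_distrib_left mult_ac)

lemma trace_scaleR: "trace (k *\<^sub>R (M::real^'n^'n)) = k * trace M"
  by (simp add: trace_def sum_distrib_left)

lemma scaleR_mv: "(k *\<^sub>R (M::real^'n^'n)) *v v = k *\<^sub>R (M *v v)"
  by (simp add: scaleR_matrix_vector_assoc)

lemma BFGS_sym_form:
  assumes "transpose G = G" "transpose A = A"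
  shows "BFGS A G u = G - (1 / (u \<bullet> (G *v u))) *\<^sub>R outer (G *v u) (G *v u)
                  + (1 / (u \<bullet> (A *v u))) *\<^sub>R outer (A *v u) (A *v u)"
proof -
  have "u v* G = G *v u" by (metis assms(1) transpose_matrix_vector)
  moreover have "u v* A = A *v u" by (metis assms(2) transpose_matrix_vector)
  ultimately show ?thesis by (simp add: BFGS_def)
qed

lemma real_psd_aux:
  fixes s p q r c :: real
  assumes "c > 0" "r \<ge> 0" "p^2 \<le> s*r" "s \<ge> 0"
  shows "0 \<le> s - (p+q)^2/(r+c) + q^2/c"
proof (cases "r = 0")
  case True
  hence "p = 0" using assms by simp
  thus ?thesis using True assms by simp
next
  case False
  hence r: "r > 0" using assms by simp
  have "p^2/r \<le> s" using assms r by (simp add: divide_le_eq mult.commute)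
  moreover have "p^2/r + q^2/c - (p+q)^2/(r+c) = (p*c - q*r)^2/(r*c*(r+c))"
    using r assms(1) by (simp add: field_simps power2_eq_square)
  moreover have "0 \<le> (p*c - q*r)^2/(r*c*(r+c))" using r assms(1) by simp
  ultimately show ?thesis by linarith
qed

lemma real_s1_aux:
  fixes a g c :: real
  assumes "0 < c" "c \<le> g" "g^2 \<le> a*c"
  shows "(a - 2*g + c)/a \<le> a/g - 1"
proof -
  have g: "g > 0" using assms by simp
  have a: "a > 0"
  proof -
    have "0 < g^2" using g by simp
    hence "0 < a*c" using assms by linarith
    thus ?thesis using assms(1) by (simp add: zero_less_mult_iff)
  qed
  have "a*a - 2*a*g + 2*g*g - c*g \<ge> 0"
  proof -
    have "c*g \<le> g*g" using assms g by (simp add: mult_right_mono)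
    moreover have "0 \<le> (a - g)^2" by simp
    ultimately show ?thesis by (simp add: power2_eq_square algebra_simps)
  qed
  thus ?thesis using a g by (simp add: field_simps)
qed

context qsetting begin

lemma BFGS_zero: "BFGS A G 0 = G" by (simp add: BFGS_def)

lemma BFGS_sym:
  assumes "transpose G = G"
  shows "transpose (BFGS A G u) = BFGS A G u"
  unfolding BFGS_sym_form[OF assms A_sym] sym_iff
  using assms unfolding sym_iff by (simp add: outer_entry mult.commute)

lemma c_pos: "u \<noteq> 0 \<Longrightarrow> 0 < u \<bullet> (A *v u)"
proof -
  assume "u \<noteq> 0"
  hence "0 < u \<bullet> u" by simp
  hence "0 < \<mu> * (u \<bullet> u)" using mu_pos by simp
  thus ?thesis using A_lo[of u] by linarith
qed

lemma c_le_g: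
  assumes "psd (G - A)"
  shows "u \<bullet> (A *v u) \<le> u \<bullet> (G *v u)"
  using assms unfolding psd_def
  by (metis diff_ge_0_iff_ge inner_diff_right matrix_vector_mult_diff_rdistrib)

lemma BFGS_psd:
  assumes sG: "transpose G = G" and pG: "psd (G - A)"
  shows "psd (BFGS A G u - A)"
proof (cases "u = 0")
  case True thus ?thesis using pG by (simp add: BFGS_zero)
next
  case False
  define R where "R = G - A"
  have sR: "transpose R = R" using sG A_sym by (simp add: R_def sym_iff)
  have pR: "psd R" using pG R_def by simp
  define c where "c = u \<bullet> (A *v u)"
  define r where "r = u \<bullet> (R *v u)"
  have c: "c > 0" using c_pos[OF False] c_def by simp
  have r: "r \<ge> 0" using pR psd_def r_def by blast
  have g: "u \<bullet> (G *v u) = r + c"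
    by (simp add: r_def c_def R_def matrix_vector_mult_diff_rdistrib inner_diff_right)
  show ?thesis unfolding psd_def
  proof
    fix v
    define p where "p = v \<bullet> (R *v u)"
    define q where "q = v \<bullet> (A *v u)"
    define s where "s = v \<bullet> (R *v v)"
    have s: "s \<ge> 0" using pR psd_def s_def by blast
    have cs: "p^2 \<le> s*r" using psd_cs[OF sR pR, of v u] by (simp add: p_def s_def r_def)
    have vGu: "v \<bullet> (G *v u) = p + q"
      by (simp add: p_def q_def R_def matrix_vector_mult_diff_rdistrib inner_diff_right)
    have "v \<bullet> ((BFGS A G u - A) *v v) =
        s - (1/(r+c)) * ((G *v u) \<bullet> v) * (v \<bullet> (G *v u)) + (1/c) * ((A *v u) \<bullet> v) * (v \<bullet> (A *v u))"
      unfolding BFGS_sym_form[OF sG A_sym]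
      by (simp add: matrix_vector_mult_diff_rdistrib matrix_vector_mult_add_rdistrib scaleR_mv outer_mv
          inner_diff_right inner_add_right s_def R_def g c_def[symmetric] algebra_simps)
    also have "\<dots> = s - (p+q)^2/(r+c) + q^2/c"
      by (simp add: inner_commute vGu q_def power2_eq_square)
    finally show "0 \<le> v \<bullet> ((BFGS A G u - A) *v v)"
      using real_psd_aux[OF c r cs s] by simp
  qed
qed

lemma BFGS_trace:
  assumes sG: "transpose G = G" and pG: "psd (G - A)" and u: "u \<noteq> 0"
  shows "sigma A (BFGS A G u) = sigma A G - ((G *v u) \<bullet> (Ai *v (G *v u))) / (u \<bullet> (G *v u)) + 1"
proof -
  have c: "u \<bullet> (A *v u) > 0" using c_pos[OF u] .
  have tc: "trace (Ai ** outer (A *v u) (A *v u)) = u \<bullet> (A *v u)"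
    by (simp add: trace_outer AiA)
  have tg: "trace (Ai ** outer (G *v u) (G *v u)) = (G *v u) \<bullet> (Ai *v (G *v u))"
    by (simp add: trace_outer inner_commute)
  show ?thesis
    unfolding sigma_def BFGS_sym_form[OF sG A_sym]
    using c by (simp add: matrix_add_ldistrib matrix_sub_ldistrib matrix_scaleR_right trace_add trace_sub
        trace_scaleR tc tg)
qed

end

context qsetting begin

lemma step1:
  assumes sG: "transpose G = G" and pG: "psd (G - A)"
  shows "sigma A (BFGS A G u) \<le> sigma A G - (theta A G u)^2"
proof (cases "u = 0")
  case True thus ?thesis by (simp add: theta_def BFGS_zero)
next
  case False
  define a where "a = (G *v u) \<bullet> (Ai *v (G *v u))"
  define g where "g = u \<bullet> (G *v u)"
  define c where "c = u \<bullet> (A *v u)"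
  have sR: "transpose (G - A) = G - A" using sG A_sym by (simp add: sym_iff)
  have c: "c > 0" using c_pos[OF False] c_def by simp
  have cg: "c \<le> g" using c_le_g[OF pG] c_def g_def by simp
  have AuGu: "(A *v u) \<bullet> (Ai *v (G *v u)) = g"
    using sym_inner[OF Ai_sym, of "A *v u" "G *v u"] by (simp add: AiA g_def)
  have GuAu: "(G *v u) \<bullet> (Ai *v (A *v u)) = g"
    using sym_inner[OF sG, of u u] by (simp add: AiA g_def inner_commute)
  have AuAu: "(A *v u) \<bullet> (Ai *v (A *v u)) = c"
    by (simp add: AiA c_def inner_commute)
  have N: "u \<bullet> (((G - A) ** Ai ** (G - A)) *v u) = ((G - A) *v u) \<bullet> (Ai *v ((G - A) *v u))"
    by (simp add: matrix_vector_mul_assoc[symmetric] sym_inner[OF sR])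
  have N2: "((G - A) *v u) \<bullet> (Ai *v ((G - A) *v u)) = a - 2*g + c"
    by (simp add: matrix_vector_mult_diff_rdistrib matrix_vector_mult_diff_distrib inner_diff_left
        inner_diff_right AuGu GuAu AuAu a_def)
  have D: "u \<bullet> ((G ** Ai ** G) *v u) = a"
    by (simp add: matrix_vector_mul_assoc[symmetric] sym_inner[OF sG] a_def)
  have th: "(theta A G u)^2 = (a - 2*g + c) / a"
  proof -
    have "0 \<le> (a - 2*g + c)" using N2 Ai_nonneg by metis
    moreover have "0 \<le> a" using Ai_nonneg a_def by simp
    ultimately show ?thesis unfolding theta_def N N2 D by simp
  qed
  have cs: "g^2 \<le> a*c"
    using psd_cs[OF Ai_sym Ai_psd, of "G *v u" "A *v u"] by (simp add: GuAu AuAu a_def)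
  show ?thesis
    unfolding BFGS_trace[OF sG pG False] th using real_s1_aux[OF c cg cs]
    by (simp add: a_def g_def)
qed

lemma step2:
  assumes sG: "transpose G = G" and pG: "psd (G - A)" and gr: "is_greedy A G u"
  shows "sigma A (BFGS A G u) \<le> (1 - \<mu> / (real CARD('n) * L)) * sigma A G"
proof -
  obtain i where u: "u = axis i 1"
    and rat: "\<forall>j. G$j$j / A$j$j \<le> G$i$i / A$i$i"
    using gr unfolding is_greedy_def axis_quad by blast
  have u0: "u \<noteq> 0" using u by simp
  define a where "a = (G *v u) \<bullet> (Ai *v (G *v u))"
  define g where "g = G$i$i"
  define c where "c = A$i$i"
  define d where "d = real CARD('n)"
  define s where "s = sigma A G"
  have gdef: "g = u \<bullet> (G *v u)" by (simp add: u g_def axis_quad)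
  have cdef: "c = u \<bullet> (A *v u)" by (simp add: u c_def axis_quad)
  have c: "c > 0" using c_pos[OF u0] cdef by simp
  have cg: "c \<le> g" using c_le_g[OF pG] cdef gdef by simp
  have g: "g > 0" using c cg by simp
  have Ajj: "\<mu> \<le> A$j$j \<and> A$j$j \<le> L" for j
    using A_lo[of "axis j 1"] A_hi[of "axis j 1"] by (simp add: axis_quad inner_axis_axis)
  have Gjj: "G$j$j \<le> (g/c) * A$j$j" for j
  proof -
    have "A$j$j > 0" using Ajj[of j] mu_pos by linarith
    thus ?thesis using rat[rule_format, of j] by (simp add: g_def c_def divide_le_eq mult.commute)
  qed
  have tG: "trace G \<le> (g/c) * trace A"
    unfolding trace_def sum_distrib_left by (rule sum_mono) (use Gjj in auto)
  have tA: "trace A \<le> d * L"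
    unfolding trace_def d_def using sum_bounded_above[of UNIV "\<lambda>j. A$j$j" L] Ajj by simp
  have tA0: "trace A > 0"
    unfolding trace_def by (rule sum_pos) (use Ajj mu_pos in \<open>auto intro: less_le_trans\<close>)
  have sb: "0 \<le> s \<and> \<mu> * s \<le> trace G - trace A"
    using sigma_bounds[OF sG pG] by (simp add: s_def trace_sub)
  have GuAu: "(G *v u) \<bullet> (Ai *v (A *v u)) = g"
    using sym_inner[OF sG, of u u] by (simp add: AiA gdef inner_commute)
  have AuAu: "(A *v u) \<bullet> (Ai *v (A *v u)) = c"
    by (simp add: AiA cdef inner_commute)
  have cs: "g^2 \<le> a*c"
    using psd_cs[OF Ai_sym Ai_psd, of "G *v u" "A *v u"] by (simp add: GuAu AuAu a_def)
  have d1: "d \<ge> 1" unfolding d_def by simp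
  have dL: "d * L > 0" using d1 mu_pos mu_le_L by simp
  have h1: "g/c \<le> a/g" using cs c g by (simp add: field_simps power2_eq_square)
  have h3: "0 \<le> g/c - 1" using c cg by simp
  have "\<mu> * s \<le> (g/c - 1) * trace A" using sb tG by (simp add: algebra_simps)
  also have "\<dots> \<le> (g/c - 1) * (d*L)" using mult_left_mono[OF tA h3] .
  also have "\<dots> \<le> (a/g - 1) * (d*L)" using h1 dL by (intro mult_right_mono) auto
  finally have "\<mu> * s / (d*L) \<le> a/g - 1" using dL by (simp add: divide_le_eq)
  hence "s - a/g + 1 \<le> (1 - \<mu>/(d*L)) * s" by (simp add: algebra_simps)
  thus ?thesis
    unfolding BFGS_trace[OF sG pG u0] using a_def gdef s_def d_def by simp
qed

end
theorem lemma4: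
  fixes A :: "real^'n^'n" and b :: "real^'n" and \<mu> L :: real
    and x :: "nat \<Rightarrow> real^'n" and G Gbar :: "nat \<Rightarrow> real^'n^'n"
    and ubar :: "nat \<Rightarrow> real^'n"
  assumes mu_pos: "0 < \<mu>" and mu_le_L: "\<mu> \<le> L"
    and A_sym: "transpose A = A"
    and A_bounds: "\<forall>v. \<mu> * (v \<bullet> v) \<le> v \<bullet> (A *v v) \<and> v \<bullet> (A *v v) \<le> L * (v \<bullet> v)"
    and G0: "G 0 = L *\<^sub>R mat 1"
    and x_step: "\<forall>t. x (Suc t) = x t - matrix_inv (G t) *v grad (quad_f A b) (x t)"
    and Gbar_def: "\<forall>t. Gbar t = BFGS A (G t) (x (Suc t) - x t)"
    and ubar_greedy: "\<forall>t. is_greedy A (Gbar t) (ubar t)"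
    and G_step: "\<forall>t. G (Suc t) = BFGS A (Gbar t) (ubar t)"
  shows "(\<forall>t. (\<forall>i\<le>t. grad (quad_f A b) (x i) \<noteq> 0) \<longrightarrow>
            sigma A (G (Suc t)) \<le> (1 - \<mu> / (real CARD('n) * L)) *
              (sigma A (G t) - (theta A (G t) (x (Suc t) - x t))\<^sup>2)) \<and>
         (\<forall>t\<ge>1. (\<forall>i<t. grad (quad_f A b) (x i) \<noteq> 0) \<longrightarrow>
            (\<Sum>i<t. (theta A (G i) (x (Suc i) - x i))\<^sup>2 / (1 - \<mu> / (real CARD('n) * L)) ^ i)
              \<le> sigma A (G 0))"
proof -
  interpret qsetting A \<mu> L using mu_pos mu_le_L A_sym A_bounds by unfold_locales
  define \<rho> where "\<rho> = 1 - \<mu> / (real CARD('n) * L)"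
  define th where "th i = (theta A (G i) (x (Suc i) - x i))\<^sup>2" for i
  have Lpos: "L > 0" using mu_pos mu_le_L by simp
  have rho0: "0 \<le> \<rho>"
  proof -
    have d1: "1 \<le> real CARD('n)" using zero_less_card_finite[where 'a='n] by linarith
    have "L \<le> real CARD('n) * L" using mult_right_mono[OF d1, of L] Lpos by simp
    hence "\<mu> \<le> real CARD('n) * L" using mu_le_L by linarith
    hence "\<mu> / (real CARD('n) * L) \<le> 1" using Lpos by (simp add: divide_le_eq)
    thus ?thesis by (simp add: \<rho>_def)
  qed
  have inv: "transpose (G t) = G t \<and> psd (G t - A)" for t
  proof (induction t)
    case 0
    have "transpose (G 0) = G 0" by (simp add: G0 sym_iff mat_def)
    moreover have "psd (G 0 - A)" unfolding psd_def
    proof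
      fix v
      have "v \<bullet> ((G 0 - A) *v v) = L * (v \<bullet> v) - v \<bullet> (A *v v)"
        by (simp add: G0 matrix_vector_mult_diff_rdistrib inner_diff_right scaleR_mv)
      thus "0 \<le> v \<bullet> ((G 0 - A) *v v)" using A_hi[of v] by simp
    qed
    ultimately show ?case by simp
  next
    case (Suc t)
    have "transpose (Gbar t) = Gbar t \<and> psd (Gbar t - A)"
      using Suc BFGS_sym BFGS_psd Gbar_def by simp
    thus ?case using BFGS_sym BFGS_psd G_step by simp
  qed
  have invb: "transpose (Gbar t) = Gbar t \<and> psd (Gbar t - A)" for t
    using inv[of t] BFGS_sym BFGS_psd Gbar_def by simp
  have s1: "sigma A (Gbar t) \<le> sigma A (G t) - th t" for t
    using step1[of "G t" "x (Suc t) - x t"] inv[of t] Gbar_def th_def by simp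
  have s2: "sigma A (G (Suc t)) \<le> \<rho> * sigma A (Gbar t)" for t
    using step2[of "Gbar t" "ubar t"] invb[of t] ubar_greedy G_step \<rho>_def by simp
  have nn: "0 \<le> sigma A (G t)" "0 \<le> sigma A (Gbar t)" for t
    using sigma_bounds inv invb by blast+
  have c1: "sigma A (G (Suc t)) \<le> \<rho> * (sigma A (G t) - th t)" for t
    using s2[of t] mult_left_mono[OF s1[of t] rho0] by linarith
  have c2: "(\<Sum>i<t. th i / \<rho> ^ i) \<le> sigma A (G 0)" if "t \<ge> 1" for t
  proof (cases "\<rho> = 0")
    case True
    have "(\<Sum>i<t. th i / \<rho> ^ i) = (\<Sum>i<t. if i = 0 then th 0 else 0)"
      by (rule sum.cong) (auto simp: True)
    also have "\<dots> = th 0" using that by simp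
    also have "\<dots> \<le> sigma A (G 0)" using s1[of 0] nn(2)[of 0] by linarith
    finally show ?thesis .
  next
    case False
    hence rp: "\<rho> > 0" using rho0 by simp
    have "(\<Sum>i<n. th i / \<rho> ^ i) + sigma A (G n) / \<rho> ^ n \<le> sigma A (G 0)" for n
    proof (induction n)
      case 0 thus ?case by simp
    next
      case (Suc n)
      have "sigma A (G (Suc n)) / \<rho> ^ Suc n \<le> \<rho> * (sigma A (G n) - th n) / \<rho> ^ Suc n"
        by (rule divide_right_mono[OF c1[of n]]) (use rp in simp)
      also have "\<dots> = (sigma A (G n) - th n) / \<rho> ^ n" using rp by simp
      finally have "th n / \<rho> ^ n + sigma A (G (Suc n)) / \<rho> ^ Suc n \<le> sigma A (G n) / \<rho> ^ n"
        by (simp add: diff_divide_distrib)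
      thus ?case using Suc by simp
    qed
    moreover have "0 \<le> sigma A (G t) / \<rho> ^ t" using nn(1)[of t] rp by simp
    ultimately show ?thesis by (smt (verit))
  qed
  show ?thesis using c1 c2 unfolding \<rho>_def th_def by blast
qed

end
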